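(* Let $a,b,c,d,e,g,h,r$ be real numbers. If the series converge, then \[ -\int_0^1\!\!\int_0^1\frac{x^{b-1}y^{g-1}}{(1-rx^cy^h)\log(x^ay^d)}\,dx\,dy=\sum_{n=0}^\infty r^n\,\frac{\log\left(\frac{d}{a}\right)-\log\left(\frac{hn+g}{cn+b}\right)}{-a(hn+g)+bd+cdn}, \] and \[ \int_0^1\!\!\int_0^1\frac{x^{b-1}y^{e-1}\left(x^ay^d-1\right)}{\left(1-rx^cy^h\right)\log(x^ay^d)}\,dx\,dy=\sum_{n=0}^\infty r^n\,\frac{\log\left(\frac{(b+cn)(d+e+hn)}{(a+b+cn)(e+hn)}\right)}{bd-ae+cdn-ahn}. \] *)

theory Defs
  imports "HOL-Analysis.Analysis"
begin

end

theory Submission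
  imports Defs "HOL-Real_Asymp.Real_Asymp"
begin


definition P :: "real \<Rightarrow> ennreal" where
  "P s = (\<integral>\<^sup>+x. ennreal (x powr (s - 1)) * indicator {0<..<1} x \<partial>lborel)"

lemma P_pos: assumes "0 < s" shows "P s = ennreal (1 / s)"
proof -
  have "((\<lambda>x. x powr (s - 1)) has_integral (1 powr (s - 1 + 1) / (s - 1 + 1))) {0..1}"
    by (rule has_integral_powr_from_0) (use assms in auto)
  then have "((\<lambda>x. x powr (s - 1)) has_integral (1 / s)) {0<..<1}"
    by (simp add: has_integral_Icc_iff_Ioo)
  from nn_integral_has_integral_lebesgue[OF _ this]
  have "(\<integral>\<^sup>+x. ennreal (indicator {0<..<1} x * x powr (s - 1)) \<partial>lborel) = ennreal (1 / s)"
    by simp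
  moreover have "\<And>x. ennreal (indicator {0<..<1} x * x powr (s - 1)) = ennreal (x powr (s - 1)) * indicator {0<..<1} x"
    by (simp split: split_indicator)
  ultimately show ?thesis unfolding P_def by simp
qed

lemma P_nonpos: assumes "s \<le> 0" shows "P s = \<infinity>"
proof (rule ccontr)
  assume "P s \<noteq> \<infinity>"
  then obtain R where R: "P s = ennreal R" "0 \<le> R" by (cases "P s") auto
  define s' where "s' = 1 / (R + 2)"
  have s': "0 < s'" "s' \<le> 1" using R by (auto simp: s'_def field_simps)
  have "P s' \<le> P s" unfolding P_def
  proof (intro nn_integral_mono)
    fix x :: real
    show "ennreal (x powr (s' - 1)) * indicator {0<..<1} x \<le> ennreal (x powr (s - 1)) * indicator {0<..<1} x"
    proof (cases "x \<in> {0<..<1}")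
      case True
      then have "x powr (s' - 1) \<le> x powr (s - 1)" using assms s' by (intro powr_mono') auto
      then show ?thesis using True by (auto split: split_indicator intro: ennreal_leI)
    qed simp
  qed
  then have "ennreal (R + 2) \<le> ennreal R" using R s' by (simp add: P_pos s'_def)
  then show False using R by (simp add: ennreal_le_iff)
qed

lemma exp_int_atLeast: assumes "0 < w"
  shows "(\<integral>\<^sup>+t. ennreal (exp (- (w * t))) * indicator {0..} t \<partial>lborel) = ennreal (1 / w)"
proof -
  have "(\<integral>\<^sup>+t. ennreal (exp (- (w * t))) * indicator {0..} t \<partial>lborel) = 0 - (- exp (- (w * 0)) / w)"
  proof (rule nn_integral_FTC_atLeast[where F="\<lambda>t. - exp (- (w * t)) / w"])
    show "DERIV (\<lambda>t. - exp (- (w * t)) / w) x :> exp (- (w * x))" for x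
      using assms by (auto intro!: derivative_eq_intros)
    show "((\<lambda>t. - exp (- (w * t)) / w) \<longlongrightarrow> 0) at_top"
      using assms by real_asymp
  qed auto
  then show ?thesis by simp
qed

lemma exp_int_01: assumes "L \<noteq> 0"
  shows "(\<integral>\<^sup>+t. ennreal (exp (L * t)) * indicator {0..1} t \<partial>lborel) = ennreal ((exp L - 1) / L)"
proof -
  have "(\<integral>\<^sup>+t. ennreal (exp (L * t)) * indicator {0..1} t \<partial>lborel) = exp (L * 1) / L - exp (L * 0) / L"
    by (rule nn_integral_FTC_Icc[where F="\<lambda>t. exp (L * t) / L"])
       (use assms in \<open>auto intro!: derivative_eq_intros\<close>)
  then show ?thesis by (simp add: diff_divide_distrib)
qed



lemma P_gt0: "P s > 0"
  by (cases "s > 0") (auto simp: P_pos P_nonpos)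

lemma nn_prod_factor:
  fixes g h :: "real \<Rightarrow> ennreal"
  assumes [measurable]: "g \<in> borel_measurable borel" "h \<in> borel_measurable borel"
  shows "(\<integral>\<^sup>+z. g (fst z) * h (snd z) \<partial>(lborel::(real\<times>real) measure)) = (\<integral>\<^sup>+x. g x \<partial>lborel) * (\<integral>\<^sup>+y. h y \<partial>lborel)"
proof -
  have "(\<integral>\<^sup>+z. g (fst z) * h (snd z) \<partial>(lborel::(real\<times>real) measure)) =
        (\<integral>\<^sup>+z. g (fst z) * h (snd z) \<partial>(lborel \<Otimes>\<^sub>M lborel))"
    by (simp add: lborel_prod)
  also have "\<dots> = (\<integral>\<^sup>+x. \<integral>\<^sup>+y. g x * h y \<partial>lborel \<partial>lborel)"
    by (rule lborel.nn_integral_fst[where f="\<lambda>z. g (fst z) * h (snd z)", simplified, symmetric]) measurable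
  also have "\<dots> = (\<integral>\<^sup>+x. g x * (\<integral>\<^sup>+y. h y \<partial>lborel) \<partial>lborel)"
    by (simp add: nn_integral_cmult)
  also have "\<dots> = (\<integral>\<^sup>+x. g x \<partial>lborel) * (\<integral>\<^sup>+y. h y \<partial>lborel)"
    by (simp add: nn_integral_multc)
  finally show ?thesis .
qed

definition S0 :: "(real \<times> real) set" where "S0 = {0<..<1} \<times> {0<..<1}"

lemma S0_borel[measurable]: "S0 \<in> sets borel"
  unfolding S0_def by (intro borel_open open_Times) auto

lemma S0_borel2[measurable]: "S0 \<in> sets (borel \<Otimes>\<^sub>M borel)"
  unfolding S0_def by (rule pair_measureI) auto

lemma meas_lborel2:
  fixes f :: "(real \<times> real) \<Rightarrow> ennreal"
  shows "f \<in> borel_measurable (borel \<Otimes>\<^sub>M borel) \<Longrightarrow> f \<in> borel_measurable lborel"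
  by (simp add: borel_prod)

lemma meas_pair_lborel:
  fixes f :: "((real \<times> real) \<times> real) \<Rightarrow> ennreal"
  shows "f \<in> borel_measurable ((borel \<Otimes>\<^sub>M borel) \<Otimes>\<^sub>M borel) \<Longrightarrow> f \<in> borel_measurable (lborel \<Otimes>\<^sub>M lborel)"
  by (simp add: measurable_cong_sets[OF sets_pair_measure_cong[OF sets_lborel sets_lborel] refl] borel_prod)

lemma tonelli_factor:
  fixes al be B G :: real and A :: "real set"
  assumes [measurable]: "A \<in> sets borel"
  shows "(\<integral>\<^sup>+z. \<integral>\<^sup>+t. ennreal (fst z powr (B + al * t - 1) * snd z powr (G + be * t - 1))
            * indicator S0 z * indicator A t \<partial>lborel \<partial>lborel)
       = (\<integral>\<^sup>+t. P (B + al * t) * P (G + be * t) * indicator A t \<partial>lborel)"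
proof -
  have pp: "pair_sigma_finite (lborel::(real\<times>real) measure) (lborel::real measure)"
    by (simp add: pair_sigma_finite_def lborel.sigma_finite_measure_axioms)
  have "(\<integral>\<^sup>+z. \<integral>\<^sup>+t. ennreal (fst z powr (B + al * t - 1) * snd z powr (G + be * t - 1))
            * indicator S0 z * indicator A t \<partial>lborel \<partial>lborel)
     = (\<integral>\<^sup>+t. \<integral>\<^sup>+z. ennreal (fst z powr (B + al * t - 1) * snd z powr (G + be * t - 1))
            * indicator S0 z * indicator A t \<partial>lborel \<partial>lborel)"
    by (rule pair_sigma_finite.Fubini[OF pp, where f="\<lambda>(z,t). ennreal (fst z powr (B + al * t - 1) * snd z powr (G + be * t - 1))
            * indicator S0 z * indicator A t", simplified, symmetric]) (unfold split_beta', intro meas_pair_lborel, measurable)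
  also have "\<dots> = (\<integral>\<^sup>+t. P (B + al * t) * P (G + be * t) * indicator A t \<partial>lborel)"
  proof (rule nn_integral_cong)
    fix t :: real
    have "(\<integral>\<^sup>+z. ennreal (fst z powr (B + al * t - 1) * snd z powr (G + be * t - 1)) * indicator S0 z \<partial>lborel)
       = (\<integral>\<^sup>+z. (ennreal (fst z powr (B + al * t - 1)) * indicator {0<..<1} (fst z)) *
                 (ennreal (snd z powr (G + be * t - 1)) * indicator {0<..<1} (snd z)) \<partial>lborel)"
      by (intro nn_integral_cong) (auto simp: S0_def ennreal_mult indicator_times mult_ac)
    also have "\<dots> = P (B + al * t) * P (G + be * t)"
      unfolding P_def by (rule nn_prod_factor) auto
    moreover have "(\<integral>\<^sup>+z. ennreal (fst z powr (B + al * t - 1) * snd z powr (G + be * t - 1))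
            * indicator S0 z * indicator A t \<partial>lborel) = (\<integral>\<^sup>+z. ennreal (fst z powr (B + al * t - 1) * snd z powr (G + be * t - 1))
            * indicator S0 z \<partial>lborel) * indicator A t"
      by (rule nn_integral_multc) (intro meas_lborel2, measurable)
    ultimately show "(\<integral>\<^sup>+z. ennreal (fst z powr (B + al * t - 1) * snd z powr (G + be * t - 1))
            * indicator S0 z * indicator A t \<partial>lborel) = P (B + al * t) * P (G + be * t) * indicator A t"
      by simp
  qed
  finally show ?thesis .
qed



lemma P_bad_interval:
  fixes Q :: "real \<Rightarrow> ennreal"
  assumes fin: "(\<integral>\<^sup>+t. P (B + a*t) * Q t * indicator {0..1} t \<partial>lborel) < \<infinity>"
    and Qpos: "\<And>t. Q t > 0"
    and lu: "l < u" "0 \<le> l" "u \<le> 1"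
    and neg: "\<And>t. l < t \<Longrightarrow> t < u \<Longrightarrow> B + a*t \<le> 0"
  shows False
proof -
  have "(\<integral>\<^sup>+t. \<infinity> * indicator {l<..<u} t \<partial>lborel) \<le> (\<integral>\<^sup>+t. P (B + a*t) * Q t * indicator {0..1} t \<partial>lborel)"
  proof (intro nn_integral_mono)
    fix t :: real
    show "\<infinity> * indicator {l<..<u} t \<le> P (B + a*t) * Q t * indicator {0..1} t"
    proof (cases "l < t \<and> t < u")
      case True
      then have "P (B + a*t) = \<infinity>" using neg by (intro P_nonpos) auto
      moreover have "t \<in> {0..1}" using True lu by auto
      ultimately show ?thesis using Qpos[of t] True by (simp add: ennreal_top_mult)
    qed auto
  qed
  moreover have "(\<integral>\<^sup>+t. \<infinity> * indicator {l<..<u} t \<partial>lborel) = \<infinity>"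
  proof -
    have "(\<integral>\<^sup>+t. \<infinity> * indicator {l<..<u} t \<partial>lborel) = \<infinity> * emeasure lborel {l<..<u}"
      by (rule nn_integral_cmult_indicator) simp
    then show ?thesis using lu by (simp add: ennreal_top_mult)
  qed
  ultimately show False using fin by simp
qed

lemma P_bad:
  fixes Q :: "real \<Rightarrow> ennreal"
  assumes fin: "(\<integral>\<^sup>+t. P (B + a*t) * Q t * indicator {0..1} t \<partial>lborel) < \<infinity>"
    and Qpos: "\<And>t. Q t > 0"
  shows "0 \<le> B \<and> 0 \<le> B + a"
proof (rule ccontr)
  assume "\<not> (0 \<le> B \<and> 0 \<le> B + a)"
  then consider "B < 0" | "B + a < 0" by linarith
  then show False
  proof cases
    case 1
    define k where "k = \<bar>a\<bar>"
    define tau where "tau = - B / (k - B)"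
    have k0: "0 \<le> k" by (simp add: k_def)
    have tau: "0 < tau" "tau \<le> 1" using 1 k0 by (auto simp: tau_def field_simps)
    have ktau: "k * tau \<le> - B" using 1 k0 by (simp add: tau_def field_simps)
    show False
    proof (rule P_bad_interval[OF fin Qpos, of 0 tau])
      fix t assume t: "0 < t" "t < tau"
      have "a * t \<le> k * t" using t by (intro mult_right_mono) (auto simp: k_def)
      also have "\<dots> \<le> k * tau" using t k0 by (intro mult_left_mono) auto
      finally show "B + a * t \<le> 0" using ktau by linarith
    qed (use tau in auto)
  next
    case 2
    define k where "k = \<bar>a\<bar>"
    define tau where "tau = - (B + a) / (k - (B + a))"
    have k0: "0 \<le> k" by (simp add: k_def)
    have tau: "0 < tau" "tau \<le> 1" using 2 k0 by (auto simp: tau_def field_simps)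
    have ktau: "k * tau \<le> - (B + a)" using 2 k0
      by (simp add: tau_def field_simps) (use zero_le_square[of "B+a"] in \<open>simp add: algebra_simps\<close>)
    show False
    proof (rule P_bad_interval[OF fin Qpos, of "1 - tau" 1])
      fix t assume t: "1 - tau < t" "t < 1"
      have "- a * (1 - t) \<le> k * (1 - t)" using t by (intro mult_right_mono) (auto simp: k_def)
      also have "\<dots> \<le> k * tau" using t k0 by (intro mult_left_mono) auto
      finally show "B + a * t \<le> 0" using ktau by (simp add: algebra_simps)
    qed (use tau in auto)
  qed
qed



lemma lim_ln_diff:
  fixes a d B G :: real
  assumes "0 < a" "0 < d" "0 < B" "0 < G"
  shows "((\<lambda>t. (ln (B + a*t) - ln (G + d*t))) \<longlongrightarrow> (ln a - ln d)) at_top"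
  using assms by real_asymp

lemma S0_iff: "z \<in> S0 \<longleftrightarrow> 0 < fst z \<and> fst z < 1 \<and> 0 < snd z \<and> snd z < 1"
  by (cases z) (auto simp: S0_def)

lemma core1_pos:
  fixes a d B G :: real
  assumes a: "0 < a" and d: "0 < d" and BG: "G / B > 0" and ne: "d*B - a*G \<noteq> 0"
  assumes int: "integrable lborel (\<lambda>z::real\<times>real. indicator S0 z * (fst z powr (B - 1) * snd z powr (G - 1) / ln (fst z powr a * snd z powr d)))"
  shows "- integral\<^sup>L lborel (\<lambda>z::real\<times>real. indicator S0 z * (fst z powr (B - 1) * snd z powr (G - 1) / ln (fst z powr a * snd z powr d)))
         = (ln (d/a) - ln (G/B)) / (- a*G + d*B)"
proof -
  define f where "f = (\<lambda>z::real\<times>real. indicator S0 z * (fst z powr (B - 1) * snd z powr (G - 1) / (- (a * ln (fst z) + d * ln (snd z)))))"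
  have eqf: "indicator S0 z * (fst z powr (B - 1) * snd z powr (G - 1) / ln (fst z powr a * snd z powr d)) = - f z" for z
  proof (cases "z \<in> S0")
    case True
    then have "ln (fst z powr a * snd z powr d) = a * ln (fst z) + d * ln (snd z)"
      by (simp add: S0_iff ln_mult ln_powr)
    then show ?thesis unfolding f_def by (simp only: divide_minus_right mult_minus_right minus_minus)
  qed (simp add: f_def)
  have fnn: "0 \<le> f z" for z
  proof (cases "z \<in> S0")
    case True
    then have "ln (fst z) < 0" "ln (snd z) < 0" by (auto simp: S0_iff)
    then have "a * ln (fst z) < 0" "d * ln (snd z) < 0" using a d by (simp_all add: mult_pos_neg)
    then have "0 < - (a * ln (fst z) + d * ln (snd z))" by linarith
    then show ?thesis using True by (simp add: f_def)
  qed (simp add: f_def)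
  have intf: "integrable lborel f"
  proof -
    have "integrable lborel (\<lambda>z. - (indicator S0 z * (fst z powr (B - 1) * snd z powr (G - 1) / ln (fst z powr a * snd z powr d))))"
      using int by (rule integrable_minus)
    then show ?thesis by (simp only: eqf minus_minus)
  qed
  have fmeas: "f \<in> borel_measurable lborel" using intf by auto
  have intval: "integral\<^sup>L lborel f = enn2real (\<integral>\<^sup>+z. ennreal (f z) \<partial>lborel)"
    by (rule integral_eq_nn_integral) (use fmeas fnn in auto)
  have fin: "(\<integral>\<^sup>+z. ennreal (f z) \<partial>lborel) < \<infinity>"
    using intf fnn by (simp add: integrable_iff_bounded)
  have rep: "(\<integral>\<^sup>+z. ennreal (f z) \<partial>lborel) =
     (\<integral>\<^sup>+z. \<integral>\<^sup>+t. ennreal (fst z powr (B + a * t - 1) * snd z powr (G + d * t - 1))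
            * indicator S0 z * indicator {0..} t \<partial>lborel \<partial>lborel)"
  proof (rule nn_integral_cong)
    fix z :: "real \<times> real"
    show "ennreal (f z) = (\<integral>\<^sup>+t. ennreal (fst z powr (B + a * t - 1) * snd z powr (G + d * t - 1))
            * indicator S0 z * indicator {0..} t \<partial>lborel)"
    proof (cases "z \<in> S0")
      case False then show ?thesis by (simp add: f_def)
    next
      case True
      obtain x y where z: "z = (x, y)" by (cases z)
      have xy: "0 < x" "x < 1" "0 < y" "y < 1" using True by (auto simp: S0_iff z)
      define w where "w = a * (- ln x) + d * (- ln y)"
      have "a * ln x < 0" "d * ln y < 0" using xy a d by (simp_all add: mult_pos_neg)
      then have w: "0 < w" by (simp add: w_def)
      have pt: "x powr (B + a * t - 1) * y powr (G + d * t - 1) = x powr (B - 1) * y powr (G - 1) * exp (- (w * t))" for t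
        using xy by (simp add: powr_def w_def exp_add[symmetric] algebra_simps)
      have "(\<integral>\<^sup>+t. ennreal (fst z powr (B + a * t - 1) * snd z powr (G + d * t - 1))
            * indicator S0 z * indicator {0..} t \<partial>lborel)
         = (\<integral>\<^sup>+t. ennreal (x powr (B - 1) * y powr (G - 1)) * (ennreal (exp (- (w * t))) * indicator {0..} t) \<partial>lborel)"
      proof (intro nn_integral_cong)
        fix t :: real
        have zin: "(x, y) \<in> S0" using True z by simp
        show "ennreal (fst z powr (B + a * t - 1) * snd z powr (G + d * t - 1)) * indicator S0 z * indicator {0..} t
           = ennreal (x powr (B - 1) * y powr (G - 1)) * (ennreal (exp (- (w * t))) * indicator {0..} t)"
          unfolding z fst_conv snd_conv pt using zin by (simp add: ennreal_mult mult_ac)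
      qed
      also have "\<dots> = ennreal (x powr (B - 1) * y powr (G - 1)) * ennreal (1 / w)"
        by (simp add: nn_integral_cmult exp_int_atLeast[OF w])
      also have "\<dots> = ennreal (f z)"
        using True w by (simp add: f_def z w_def ennreal_mult[symmetric])
      finally show ?thesis ..
    qed
  qed
  also have "\<dots> = (\<integral>\<^sup>+t. P (B + a * t) * P (G + d * t) * indicator {0..} t \<partial>lborel)"
    by (rule tonelli_factor) simp
  finally have rep2: "(\<integral>\<^sup>+z. ennreal (f z) \<partial>lborel) = (\<integral>\<^sup>+t. P (B + a * t) * P (G + d * t) * indicator {0..} t \<partial>lborel)" .
  have fin01: "(\<integral>\<^sup>+t. P (B + a * t) * P (G + d * t) * indicator {0..1} t \<partial>lborel) < \<infinity>"
  proof -
    have "(\<integral>\<^sup>+t. P (B + a * t) * P (G + d * t) * indicator {0..1} t \<partial>lborel)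
        \<le> (\<integral>\<^sup>+t. P (B + a * t) * P (G + d * t) * indicator {0..} t \<partial>lborel)"
      by (intro nn_integral_mono) (simp split: split_indicator)
    then show ?thesis using fin rep2 by simp
  qed
  have "0 \<le> B \<and> 0 \<le> B + a" by (rule P_bad[OF fin01 P_gt0])
  moreover have "0 \<le> G \<and> 0 \<le> G + d"
    by (rule P_bad[of G d "\<lambda>t. P (B + a * t)"]) (use fin01 P_gt0 in \<open>simp_all add: mult_ac\<close>)
  ultimately have B: "0 < B" and G: "0 < G" using BG by (auto simp: less_le)
  define F where "F = (\<lambda>t. (ln (B + a*t) - ln (G + d*t)) / (a*G - d*B))"
  define T where "T = (ln a - ln d) / (a*G - d*B)"
  have ne2: "a*G - d*B \<noteq> 0" using ne by linarith
  have "(\<integral>\<^sup>+t. P (B + a * t) * P (G + d * t) * indicator {0..} t \<partial>lborel)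
      = (\<integral>\<^sup>+t. ennreal (1 / ((B + a*t) * (G + d*t))) * indicator {0..} t \<partial>lborel)"
  proof (intro nn_integral_cong)
    fix t :: real
    show "P (B + a * t) * P (G + d * t) * indicator {0..} t = ennreal (1 / ((B + a*t) * (G + d*t))) * indicator {0..} t"
    proof (cases "0 \<le> t")
      case True
      then have "0 < B + a*t" "0 < G + d*t" using B G a d by (auto intro: add_pos_nonneg)
      then show ?thesis using True by (simp add: P_pos ennreal_mult[symmetric])
    qed simp
  qed
  also have "\<dots> = T - F 0"
  proof (rule nn_integral_FTC_atLeast)
    show "(\<lambda>t. 1 / ((B + a*t) * (G + d*t))) \<in> borel_measurable borel" by measurable
    fix t :: real assume t: "0 \<le> t"
    then have p: "0 < B + a*t" "0 < G + d*t" using B G a d by (auto intro: add_pos_nonneg)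
    show "0 \<le> 1 / ((B + a*t) * (G + d*t))" using p by simp
    have e1: "a/(B+a*t) - d/(G+d*t) = (a*G - d*B) / ((B + a*t) * (G + d*t))"
      using p by (simp add: field_simps)
    have e2: "(a/(B+a*t) - d/(G+d*t)) / (a*G - d*B) = 1 / ((B + a*t) * (G + d*t))"
      unfolding e1 using ne2 by (metis div_self divide_divide_eq_left mult.commute divide_divide_eq_right times_divide_eq_left mult_1)
    have "DERIV F t :> (a/(B+a*t) - d/(G+d*t)) / (a*G - d*B)"
      unfolding F_def using p ne2 by (auto intro!: derivative_eq_intros)
    then show "DERIV F t :> 1 / ((B + a*t) * (G + d*t))" by (simp only: e2)
  next
    show "(F \<longlongrightarrow> T) at_top" unfolding F_def T_def
      by (intro tendsto_divide tendsto_const lim_ln_diff a d B G ne2)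
  qed
  finally have val: "(\<integral>\<^sup>+z. ennreal (f z) \<partial>lborel) = ennreal (T - F 0)" using rep2 by simp
  have Tnn: "0 \<le> T - F 0"
  proof -
    have "T - F 0 = ((ln a - ln d) - (ln B - ln G)) / (a*G - d*B)"
      by (simp add: T_def F_def diff_divide_distrib)
    also have "(ln a - ln d) - (ln B - ln G) = ln (a*G) - ln (d*B)"
      using a d B G by (simp add: ln_mult)
    finally have eq: "T - F 0 = (ln (a*G) - ln (d*B)) / (a*G - d*B)" .
    show ?thesis
    proof (cases "a*G > d*B")
      case True
      then have "ln (d*B) < ln (a*G)" using d B a G by (subst ln_less_cancel_iff) auto
      then show ?thesis using True eq by simp
    next
      case False
      then have "ln (a*G) \<le> ln (d*B)" using d B a G by (subst ln_le_cancel_iff) auto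
      then show ?thesis using False eq by (simp add: divide_nonpos_nonpos)
    qed
  qed
  have "integral\<^sup>L lborel f = T - F 0" using intval val Tnn by simp
  moreover have "T - F 0 = (ln (d/a) - ln (G/B)) / (- a*G + d*B)"
  proof -
    have "T - F 0 = ((ln a - ln d) - (ln B - ln G)) / (a*G - d*B)"
      by (simp add: T_def F_def diff_divide_distrib)
    also have "\<dots> = (- ((ln a - ln d) - (ln B - ln G))) / (- (a*G - d*B))"
      by (rule minus_divide_divide[symmetric])
    also have "- ((ln a - ln d) - (ln B - ln G)) = ln (d/a) - ln (G/B)"
      using a d B G by (simp add: ln_div)
    also have "- (a*G - d*B) = - a*G + d*B" by simp
    finally show ?thesis .
  qed
  ultimately show ?thesis
    by (simp only: eqf Bochner_Integration.integral_minus minus_minus)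
qed



lemma null_sections1:
  fixes Z :: "(real \<times> real) set"
  assumes Zm: "Z \<in> sets (borel \<Otimes>\<^sub>M borel)" and fin: "\<And>x. finite (Pair x -` Z)"
  shows "Z \<in> null_sets lborel"
proof -
  have Zm': "Z \<in> sets (lborel \<Otimes>\<^sub>M (lborel::real measure))"
    using Zm by (simp add: sets_pair_measure_cong[OF sets_lborel sets_lborel])
  have "emeasure (lborel \<Otimes>\<^sub>M lborel) Z = (\<integral>\<^sup>+x. emeasure lborel (Pair x -` Z) \<partial>lborel)"
    by (rule lborel.emeasure_pair_measure_alt[OF Zm'])
  also have "\<dots> = 0"
  proof -
    have "\<And>x. emeasure lborel (Pair x -` Z) = 0"
      using fin by (intro null_setsD1 finite_imp_null_set_lborel)
    then show ?thesis by simp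
  qed
  finally have "Z \<in> null_sets (lborel \<Otimes>\<^sub>M (lborel::real measure))" using Zm' by (simp add: null_sets_def)
  then show ?thesis by (simp add: lborel_prod)
qed

lemma null_sections2:
  fixes Z :: "(real \<times> real) set"
  assumes Zm: "Z \<in> sets (borel \<Otimes>\<^sub>M borel)" and fin: "\<And>y. finite ((\<lambda>x. (x, y)) -` Z)"
  shows "Z \<in> null_sets lborel"
proof -
  have Zm': "Z \<in> sets (lborel \<Otimes>\<^sub>M (lborel::real measure))"
    using Zm by (simp add: sets_pair_measure_cong[OF sets_lborel sets_lborel])
  have "emeasure (lborel \<Otimes>\<^sub>M lborel) Z = (\<integral>\<^sup>+y. emeasure lborel ((\<lambda>x. (x, y)) -` Z) \<partial>lborel)"
    by (rule lborel_pair.emeasure_pair_measure_alt2[OF Zm'])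
  also have "\<dots> = 0"
  proof -
    have "\<And>y. emeasure lborel ((\<lambda>x. (x, y)) -` Z) = 0"
      using fin by (intro null_setsD1 finite_imp_null_set_lborel)
    then show ?thesis by simp
  qed
  finally have "Z \<in> null_sets (lborel \<Otimes>\<^sub>M (lborel::real measure))" using Zm' by (simp add: null_sets_def)
  then show ?thesis by (simp add: lborel_prod)
qed

lemma finite_if_unique: "(\<And>u v. u \<in> A \<Longrightarrow> v \<in> A \<Longrightarrow> u = v) \<Longrightarrow> finite A"
proof (cases "A = {}")
  case False
  then obtain u where "u \<in> A" by auto
  moreover assume "\<And>u v. u \<in> A \<Longrightarrow> v \<in> A \<Longrightarrow> u = v"
  ultimately have "A \<subseteq> {u}" by auto
  then show ?thesis using finite_subset by blast
qed simp

lemma level_null: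
  fixes a d :: real
  assumes "a \<noteq> 0 \<or> d \<noteq> 0"
  shows "{z \<in> S0. fst z powr a * snd z powr d = 1} \<in> null_sets lborel"
proof -
  let ?Z = "{z \<in> S0. fst z powr a * snd z powr d = 1}"
  have Zm: "?Z \<in> sets (borel \<Otimes>\<^sub>M borel)" by measurable
  show ?thesis
  proof (cases "d \<noteq> 0")
    case True
    show ?thesis
    proof (rule null_sections1[OF Zm], rule finite_if_unique)
      fix x u v assume "u \<in> Pair x -` ?Z" "v \<in> Pair x -` ?Z"
      then have uv: "0 < x" "0 < u" "0 < v" "x powr a * u powr d = 1" "x powr a * v powr d = 1"
        by (auto simp: S0_iff)
      have "x powr a * u powr d = x powr a * v powr d" using uv by simp
      moreover have "x powr a \<noteq> 0" using uv by simp
      ultimately have "u powr d = v powr d" by simp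
      then have "ln (u powr d) = ln (v powr d)" by simp
      then have "d * ln u = d * ln v" using uv by (simp add: ln_powr)
      then show "u = v" using True uv by simp
    qed
  next
    case False
    then have a: "a \<noteq> 0" using assms by simp
    show ?thesis
    proof (rule null_sections2[OF Zm], rule finite_if_unique)
      fix y u v assume "u \<in> (\<lambda>x. (x, y)) -` ?Z" "v \<in> (\<lambda>x. (x, y)) -` ?Z"
      then have uv: "0 < y" "0 < u" "0 < v" "u powr a * y powr d = 1" "v powr a * y powr d = 1"
        by (auto simp: S0_iff)
      have "u powr a * y powr d = v powr a * y powr d" using uv by simp
      moreover have "y powr d \<noteq> 0" using uv by simp
      ultimately have "u powr a = v powr a" by simp
      then have "ln (u powr a) = ln (v powr a)" by simp
      then have "a * ln u = a * ln v" using uv by (simp add: ln_powr)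
      then show "u = v" using a uv by simp
    qed
  qed
qed



lemma core2:
  fixes a d B E :: real
  assumes pos: "(B * (d + E)) / ((a + B) * E) > 0" and ne: "d*B - a*E \<noteq> 0"
  assumes int: "integrable lborel (\<lambda>z::real\<times>real. indicator S0 z * (fst z powr (B - 1) * snd z powr (E - 1) * (fst z powr a * snd z powr d - 1) / ln (fst z powr a * snd z powr d)))"
  shows "integral\<^sup>L lborel (\<lambda>z::real\<times>real. indicator S0 z * (fst z powr (B - 1) * snd z powr (E - 1) * (fst z powr a * snd z powr d - 1) / ln (fst z powr a * snd z powr d)))
         = ln ((B * (d + E)) / ((a + B) * E)) / (d*B - a*E)"
proof -
  define f where "f = (\<lambda>z::real\<times>real. indicator S0 z * (fst z powr (B - 1) * snd z powr (E - 1) * (fst z powr a * snd z powr d - 1) / ln (fst z powr a * snd z powr d)))"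
  have fnn: "0 \<le> f z" for z
  proof (cases "z \<in> S0")
    case True
    define u where "u = fst z powr a * snd z powr d"
    have u: "0 < u" using True by (simp add: u_def S0_iff)
    have q: "0 \<le> (u - 1) / ln u"
    proof (cases "u > 1")
      case True then show ?thesis by simp
    next
      case False
      then have "u - 1 \<le> 0" "ln u \<le> 0" using u by auto
      then show ?thesis by (simp add: divide_nonpos_nonpos)
    qed
    have "f z = fst z powr (B - 1) * snd z powr (E - 1) * ((u - 1) / ln u)"
      using True by (simp add: f_def u_def)
    moreover have "0 \<le> fst z powr (B - 1) * snd z powr (E - 1) * ((u - 1) / ln u)"
      by (rule mult_nonneg_nonneg[OF _ q]) simp
    ultimately show ?thesis by (metis times_divide_eq_right)
  qed (simp add: f_def)
  have ad: "a \<noteq> 0 \<or> d \<noteq> 0" using ne by auto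
  define Z where "Z = {z \<in> S0. fst z powr a * snd z powr d = 1}"
  have AEZ: "AE z in lborel. z \<notin> Z"
    unfolding Z_def by (rule AE_not_in[OF level_null[OF ad]])
  have fmeas: "f \<in> borel_measurable lborel" using int by (auto simp: f_def)
  have intval: "integral\<^sup>L lborel f = enn2real (\<integral>\<^sup>+z. ennreal (f z) \<partial>lborel)"
    by (rule integral_eq_nn_integral) (use fmeas fnn in auto)
  have fin: "(\<integral>\<^sup>+z. ennreal (f z) \<partial>lborel) < \<infinity>"
  proof -
    have intf: "integrable lborel f" using int by (simp only: f_def)
    then show ?thesis using fnn by (simp add: integrable_iff_bounded)
  qed
  have "(\<integral>\<^sup>+z. ennreal (f z) \<partial>lborel) =
     (\<integral>\<^sup>+z. \<integral>\<^sup>+t. ennreal (fst z powr (B + a * t - 1) * snd z powr (E + d * t - 1))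
            * indicator S0 z * indicator {0..1} t \<partial>lborel \<partial>lborel)"
  proof (rule nn_integral_cong_AE)
    show "AE z in lborel. ennreal (f z) = (\<integral>\<^sup>+t. ennreal (fst z powr (B + a * t - 1) * snd z powr (E + d * t - 1))
            * indicator S0 z * indicator {0..1} t \<partial>lborel)"
      using AEZ
    proof eventually_elim
      fix z :: "real \<times> real" assume zZ: "z \<notin> Z"
      show "ennreal (f z) = (\<integral>\<^sup>+t. ennreal (fst z powr (B + a * t - 1) * snd z powr (E + d * t - 1))
            * indicator S0 z * indicator {0..1} t \<partial>lborel)"
      proof (cases "z \<in> S0")
        case False then show ?thesis by (simp add: f_def)
      next
        case True
        obtain x y where z: "z = (x, y)" by (cases z)
        have xy: "0 < x" "x < 1" "0 < y" "y < 1" using True by (auto simp: S0_iff z)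
        define L where "L = a * ln x + d * ln y"
        define u where "u = x powr a * y powr d"
        have u: "0 < u" using xy by (simp add: u_def)
        have u1: "u \<noteq> 1" using zZ True by (simp add: Z_def z u_def)
        have lnu: "ln u = L" using xy by (simp add: u_def L_def ln_mult ln_powr)
        have L: "L \<noteq> 0" using u u1 lnu by auto
        have expL: "exp L = u" using u lnu by auto
        have pt: "x powr (B + a * t - 1) * y powr (E + d * t - 1) = x powr (B - 1) * y powr (E - 1) * exp (L * t)" for t
          using xy by (simp add: powr_def L_def exp_add[symmetric] algebra_simps)
        have "(\<integral>\<^sup>+t. ennreal (fst z powr (B + a * t - 1) * snd z powr (E + d * t - 1))
              * indicator S0 z * indicator {0..1} t \<partial>lborel)
           = (\<integral>\<^sup>+t. ennreal (x powr (B - 1) * y powr (E - 1)) * (ennreal (exp (L * t)) * indicator {0..1} t) \<partial>lborel)"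
        proof (intro nn_integral_cong)
          fix t :: real
          have zin: "(x, y) \<in> S0" using True z by simp
          show "ennreal (fst z powr (B + a * t - 1) * snd z powr (E + d * t - 1)) * indicator S0 z * indicator {0..1} t
             = ennreal (x powr (B - 1) * y powr (E - 1)) * (ennreal (exp (L * t)) * indicator {0..1} t)"
            unfolding z fst_conv snd_conv pt using zin by (simp add: ennreal_mult mult_ac)
        qed
        also have "\<dots> = ennreal (x powr (B - 1) * y powr (E - 1)) * ennreal ((exp L - 1) / L)"
          by (simp add: nn_integral_cmult exp_int_01[OF L])
        also have "\<dots> = ennreal (x powr (B - 1) * y powr (E - 1) * ((exp L - 1) / L))"
        proof -
          have "0 \<le> (exp L - 1) / L"
          proof (cases "L > 0")
            case True then show ?thesis by simp
          next
            case False then have "L < 0" using L by simp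
            then show ?thesis by (simp add: divide_nonpos_neg)
          qed
          then show ?thesis by (subst ennreal_mult[symmetric]) simp_all
        qed
        also have "\<dots> = ennreal (f z)"
          using True xy by (simp add: f_def z expL lnu[symmetric] u_def)
        finally show ?thesis ..
      qed
    qed
  qed
  also have "\<dots> = (\<integral>\<^sup>+t. P (B + a * t) * P (E + d * t) * indicator {0..1} t \<partial>lborel)"
    by (rule tonelli_factor) simp
  finally have rep2: "(\<integral>\<^sup>+z. ennreal (f z) \<partial>lborel) = (\<integral>\<^sup>+t. P (B + a * t) * P (E + d * t) * indicator {0..1} t \<partial>lborel)" .
  have fin01: "(\<integral>\<^sup>+t. P (B + a * t) * P (E + d * t) * indicator {0..1} t \<partial>lborel) < \<infinity>"
    using fin rep2 by simp
  have "0 \<le> B \<and> 0 \<le> B + a" by (rule P_bad[OF fin01 P_gt0])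
  moreover have "0 \<le> E \<and> 0 \<le> E + d"
    by (rule P_bad[of E d "\<lambda>t. P (B + a * t)"]) (use fin01 P_gt0 in \<open>simp_all add: mult_ac\<close>)
  moreover have "B \<noteq> 0" "d + E \<noteq> 0" "a + B \<noteq> 0" "E \<noteq> 0" using pos by auto
  ultimately have B: "0 < B" "0 < B + a" and Ep: "0 < E" "0 < E + d" by (auto simp: less_le add.commute)
  have lin: "0 < B + a * t" "0 < E + d * t" if t: "0 \<le> t" "t \<le> 1" for t
  proof -
    have "B + a * t = (1 - t) * B + t * (B + a)" "E + d * t = (1 - t) * E + t * (E + d)" by algebra+
    moreover have "0 < (1 - t) * B + t * (B + a)"
    proof (cases "t = 1")
      case True then show ?thesis using B by simp
    next
      case False then have "0 < (1 - t) * B" using t B by simp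
      moreover have "0 \<le> t * (B + a)" using t B by simp
      ultimately show ?thesis by linarith
    qed
    moreover have "0 < (1 - t) * E + t * (E + d)"
    proof (cases "t = 1")
      case True then show ?thesis using Ep by simp
    next
      case False then have "0 < (1 - t) * E" using t Ep by simp
      moreover have "0 \<le> t * (E + d)" using t Ep by simp
      ultimately show ?thesis by linarith
    qed
    ultimately show "0 < B + a * t" "0 < E + d * t" by simp_all
  qed
  define F where "F = (\<lambda>t. (ln (B + a*t) - ln (E + d*t)) / (a*E - d*B))"
  have ne2: "a*E - d*B \<noteq> 0" using ne by linarith
  have mg: "(\<lambda>t. 1 / ((B + a*t) * (E + d*t))) \<in> borel_measurable borel" by measurable
  have der: "DERIV F t :> 1 / ((B + a*t) * (E + d*t))" if "t \<in> {0..1}" for t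
  proof -
    have p: "0 < B + a*t" "0 < E + d*t" using lin that by auto
    have e1: "a/(B+a*t) - d/(E+d*t) = (a*E - d*B) / ((B + a*t) * (E + d*t))"
      using p by (simp add: field_simps)
    have e2: "(a/(B+a*t) - d/(E+d*t)) / (a*E - d*B) = 1 / ((B + a*t) * (E + d*t))"
      unfolding e1 using ne2 by (metis div_self divide_divide_eq_left mult.commute divide_divide_eq_right times_divide_eq_left mult_1)
    have "DERIV F t :> (a/(B+a*t) - d/(E+d*t)) / (a*E - d*B)"
      unfolding F_def using p ne2 by (auto intro!: derivative_eq_intros)
    then show ?thesis by (simp only: e2)
  qed
  have nng: "0 \<le> 1 / ((B + a*t) * (E + d*t))" if "t \<in> {0..1}" for t
  proof -
    have "0 < B + a*t" "0 < E + d*t" using lin that by auto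
    then show ?thesis by simp
  qed
  have "(\<integral>\<^sup>+t. P (B + a * t) * P (E + d * t) * indicator {0..1} t \<partial>lborel)
      = (\<integral>\<^sup>+t. ennreal (1 / ((B + a*t) * (E + d*t))) * indicator {0..1} t \<partial>lborel)"
  proof (intro nn_integral_cong)
    fix t :: real
    show "P (B + a * t) * P (E + d * t) * indicator {0..1} t = ennreal (1 / ((B + a*t) * (E + d*t))) * indicator {0..1} t"
    proof (cases "t \<in> {0..1}")
      case True
      then have "0 < B + a*t" "0 < E + d*t" using lin by auto
      then show ?thesis using True by (simp add: P_pos ennreal_mult[symmetric])
    qed simp
  qed
  also have "\<dots> = F 1 - F 0"
    by (rule nn_integral_FTC_Icc[OF mg der nng]) auto
  finally have val: "(\<integral>\<^sup>+z. ennreal (f z) \<partial>lborel) = ennreal (F 1 - F 0)" using rep2 by simp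
  have "(\<integral>t. 1 / ((B + a*t) * (E + d*t)) * indicator {0..1} t \<partial>lborel) = F 1 - F 0"
    by (rule integral_FTC_Icc_nonneg[OF mg der nng]) auto
  moreover have "0 \<le> (\<integral>t. 1 / ((B + a*t) * (E + d*t)) * indicator {0..1} t \<partial>lborel)"
    by (rule Bochner_Integration.integral_nonneg) (use nng in \<open>auto split: split_indicator\<close>)
  ultimately have vnn: "0 \<le> F 1 - F 0" by simp
  have "integral\<^sup>L lborel f = F 1 - F 0" using intval val vnn by simp
  moreover have "F 1 - F 0 = ln ((B * (d + E)) / ((a + B) * E)) / (d*B - a*E)"
  proof -
    have "F 1 - F 0 = ((ln (B + a) - ln (E + d)) - (ln B - ln E)) / (a*E - d*B)"
      by (simp add: F_def diff_divide_distrib)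
    also have "\<dots> = (- ((ln (B + a) - ln (E + d)) - (ln B - ln E))) / (- (a*E - d*B))"
      by (rule minus_divide_divide[symmetric])
    also have "- ((ln (B + a) - ln (E + d)) - (ln B - ln E)) = ln ((B * (d + E)) / ((a + B) * E))"
      using B Ep by (simp add: ln_div ln_mult add.commute)
    also have "- (a*E - d*B) = d*B - a*E" by simp
    finally show ?thesis .
  qed
  ultimately show ?thesis by (simp add: f_def)
qed



lemma core1:
  fixes a d B G :: real
  assumes ad: "d / a > 0" and BG: "G / B > 0" and ne: "- a*G + d*B \<noteq> 0"
  assumes int: "integrable lborel (\<lambda>z::real\<times>real. indicator S0 z * (fst z powr (B - 1) * snd z powr (G - 1) / ln (fst z powr a * snd z powr d)))"
  shows "- integral\<^sup>L lborel (\<lambda>z::real\<times>real. indicator S0 z * (fst z powr (B - 1) * snd z powr (G - 1) / ln (fst z powr a * snd z powr d)))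
         = (ln (d/a) - ln (G/B)) / (- a*G + d*B)"
proof (cases "a > 0")
  case True
  then have "d > 0" using ad by (simp add: zero_less_divide_iff)
  then show ?thesis using core1_pos[OF True _ BG _ int] ne by simp
next
  case False
  then have a: "a < 0" using ad by (cases "a = 0") auto
  then have d: "d < 0" using ad by (simp add: zero_less_divide_iff)
  define g where "g = (\<lambda>z::real\<times>real. indicator S0 z * (fst z powr (B - 1) * snd z powr (G - 1) / ln (fst z powr (-a) * snd z powr (-d))))"
  have eq: "g z = - (indicator S0 z * (fst z powr (B - 1) * snd z powr (G - 1) / ln (fst z powr a * snd z powr d)))" for z
  proof (cases "z \<in> S0")
    case True
    then have "ln (fst z powr (-a) * snd z powr (-d)) = - ln (fst z powr a * snd z powr d)"
      by (simp add: S0_iff ln_mult ln_powr)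
    then show ?thesis unfolding g_def by (simp only: divide_minus_right mult_minus_right)
  qed (simp add: g_def)
  have intg: "integrable lborel g" unfolding eq by (rule integrable_minus[OF int])
  define X where "X = ln (d/a) - ln (G/B)"
  have "- integral\<^sup>L lborel g = (ln ((-d)/(-a)) - ln (G/B)) / (- (-a)*G + (-d)*B)"
    by (rule core1_pos[of "-a" "-d" G B, OF _ _ BG _ intg[unfolded g_def], folded g_def]) (use a d ne in simp_all)
  also have "(ln ((-d)/(-a)) - ln (G/B)) = X" by (simp add: X_def)
  also have "- (-a)*G + (-d)*B = - (- a*G + d*B)" by simp
  finally have v: "- integral\<^sup>L lborel g = X / (- (- a*G + d*B))" .
  have "integral\<^sup>L lborel g = - integral\<^sup>L lborel (\<lambda>z::real\<times>real. indicator S0 z * (fst z powr (B - 1) * snd z powr (G - 1) / ln (fst z powr a * snd z powr d)))"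
  proof -
    have geq: "g = (\<lambda>z. - (indicator S0 z * (fst z powr (B - 1) * snd z powr (G - 1) / ln (fst z powr a * snd z powr d))))"
      by (rule ext) (rule eq)
    show ?thesis by (simp only: geq Bochner_Integration.integral_minus)
  qed
  then show ?thesis using v unfolding X_def[symmetric]
    by (simp only: minus_minus divide_minus_right)
qed

lemma pow_term:
  fixes x y r c h b g W :: real
  assumes "0 < x" "0 < y"
  shows "(r * x powr c * y powr h) ^ n * (x powr (b - 1) * y powr (g - 1) * W)
       = r ^ n * (x powr (c * real n + b - 1) * y powr (h * real n + g - 1) * W)"
proof -
  have "x powr (c * real n + b - 1) = (x powr c) ^ n * x powr (b - 1)"
    using assms by (simp add: powr_power powr_add[symmetric] algebra_simps)
  moreover have "y powr (h * real n + g - 1) = (y powr h) ^ n * y powr (g - 1)"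
    using assms by (simp add: powr_power powr_add[symmetric] algebra_simps)
  ultimately show ?thesis by (simp add: power_mult_distrib)
qed



lemma series_int:
  fixes K p :: "'a \<Rightarrow> real"
  assumes int: "integrable M (\<lambda>z. K z / (1 - p z))"
  and measK: "K \<in> borel_measurable M" and measp: "p \<in> borel_measurable M"
  and lt: "\<And>z. K z \<noteq> 0 \<Longrightarrow> \<bar>p z\<bar> < 1"
  shows "(\<lambda>n. integral\<^sup>L M (\<lambda>z. p z ^ n * K z)) sums integral\<^sup>L M (\<lambda>z. K z / (1 - p z))"
proof -
  define w where "w = (\<lambda>z. 2 * \<bar>K z / (1 - p z)\<bar>)"
  have intw: "integrable M w" unfolding w_def by (intro integrable_mult_right integrable_abs int)
  have bnd_term: "\<bar>p z ^ n * K z\<bar> \<le> w z" for z n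
  proof (cases "K z = 0")
    case True then show ?thesis by (simp add: w_def)
  next
    case False
    then have l: "\<bar>p z\<bar> < 1" by (rule lt)
    have "\<bar>p z ^ n\<bar> \<le> 1" using l by (simp add: power_abs power_le_one)
    then have "\<bar>p z ^ n * K z\<bar> \<le> \<bar>K z\<bar>" by (simp add: abs_mult mult_left_le_one_le)
    also have "\<bar>K z\<bar> = \<bar>1 - p z\<bar> * \<bar>K z / (1 - p z)\<bar>" using l by (simp add: abs_mult[symmetric])
    also have "\<dots> \<le> 2 * \<bar>K z / (1 - p z)\<bar>" using l by (intro mult_right_mono) auto
    finally show ?thesis by (simp add: w_def)
  qed
  have intterm: "integrable M (\<lambda>z. p z ^ n * K z)" for n
    by (rule Bochner_Integration.integrable_bound[OF intw]) (use measK measp bnd_term w_def in auto)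
  define s where "s = (\<lambda>N z. \<Sum>n<N. p z ^ n * K z)"
  have lim: "(\<lambda>N. s N z) \<longlonglongrightarrow> K z / (1 - p z)" for z
  proof (cases "K z = 0")
    case True then show ?thesis by (simp add: s_def)
  next
    case False
    then have l: "\<bar>p z\<bar> < 1" by (rule lt)
    have "(\<lambda>n. p z ^ n) sums (1 / (1 - p z))" using l by (intro geometric_sums) auto
    then have "(\<lambda>n. p z ^ n * K z) sums (1 / (1 - p z) * K z)" by (rule sums_mult2)
    then show ?thesis by (simp add: sums_def s_def)
  qed
  have bnd: "\<bar>s N z\<bar> \<le> w z" for N z
  proof (cases "K z = 0")
    case True then show ?thesis by (simp add: s_def w_def)
  next
    case False
    then have l: "\<bar>p z\<bar> < 1" by (rule lt)
    then have ne: "p z \<noteq> 1" by auto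
    have "s N z = (1 - p z ^ N) * (K z / (1 - p z))"
      unfolding s_def sum_distrib_right[symmetric] using ne by (simp add: sum_gp_strict)
    moreover have "\<bar>1 - p z ^ N\<bar> \<le> 2"
    proof -
      have "\<bar>p z ^ N\<bar> \<le> 1" using l by (simp add: power_abs power_le_one)
      then show ?thesis by linarith
    qed
    ultimately show ?thesis unfolding w_def
      by (simp only: abs_mult) (intro mult_right_mono; simp)
  qed
  have "(\<lambda>N. integral\<^sup>L M (s N)) \<longlonglongrightarrow> integral\<^sup>L M (\<lambda>z. K z / (1 - p z))"
    by (rule integral_dominated_convergence[where w=w]) (use measK measp intw lim bnd in \<open>auto simp: s_def\<close>)
  moreover have "integral\<^sup>L M (s N) = (\<Sum>n<N. integral\<^sup>L M (\<lambda>z. p z ^ n * K z))" for N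
    unfolding s_def by (rule Bochner_Integration.integral_sum[where f="\<lambda>n z. p z ^ n * K z"]) (use intterm in auto)
  ultimately show ?thesis by (simp add: sums_def)
qed

lemma series_int_term:
  fixes K p :: "'a \<Rightarrow> real"
  assumes int: "integrable M (\<lambda>z. K z / (1 - p z))"
  and measK: "K \<in> borel_measurable M" and measp: "p \<in> borel_measurable M"
  and lt: "\<And>z. K z \<noteq> 0 \<Longrightarrow> \<bar>p z\<bar> < 1"
  shows "integrable M (\<lambda>z. p z ^ n * K z)"
proof -
  define w where "w = (\<lambda>z. 2 * \<bar>K z / (1 - p z)\<bar>)"
  have intw: "integrable M w" unfolding w_def by (intro integrable_mult_right integrable_abs int)
  have bnd_term: "\<bar>p z ^ n * K z\<bar> \<le> w z" for z
  proof (cases "K z = 0")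
    case True then show ?thesis by (simp add: w_def)
  next
    case False
    then have l: "\<bar>p z\<bar> < 1" by (rule lt)
    have "\<bar>p z ^ n\<bar> \<le> 1" using l by (simp add: power_abs power_le_one)
    then have "\<bar>p z ^ n * K z\<bar> \<le> \<bar>K z\<bar>" by (simp add: abs_mult mult_left_le_one_le)
    also have "\<bar>K z\<bar> = \<bar>1 - p z\<bar> * \<bar>K z / (1 - p z)\<bar>" using l by (simp add: abs_mult[symmetric])
    also have "\<dots> \<le> 2 * \<bar>K z / (1 - p z)\<bar>" using l by (intro mult_right_mono) auto
    finally show ?thesis by (simp add: w_def)
  qed
  show ?thesis
    by (rule Bochner_Integration.integrable_bound[OF intw]) (use measK measp bnd_term w_def in auto)
qed

lemma meas_lborel_real:
  fixes f :: "(real \<times> real) \<Rightarrow> real"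
  shows "f \<in> borel_measurable (borel \<Otimes>\<^sub>M borel) \<Longrightarrow> f \<in> borel_measurable lborel"
  by (simp add: borel_prod)

lemma base_pow:
  fixes x y r c h b g :: real
  assumes "0 < x" "0 < y"
  shows "(r * x powr c * y powr h) ^ n * (x powr (b - 1) * y powr (g - 1))
       = r ^ n * (x powr (c * real n + b - 1) * y powr (h * real n + g - 1))"
  using pow_term[OF assms, of r c h n b g 1] by simp



theorem theorem2p1:
  fixes a b c d e g h r :: real
  defines "S \<equiv> {0<..<(1::real)} \<times> {0<..<(1::real)}"
  defines "F1 \<equiv> (\<lambda>p::real\<times>real. let x = fst p; y = snd p in
             x powr (b - 1) * y powr (g - 1) /
             ((1 - r * x powr c * y powr h) * ln (x powr a * y powr d)))"
  defines "T1 \<equiv> (\<lambda>n::nat. r ^ n * (ln (d / a) - ln ((h * real n + g) / (c * real n + b))) /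
             (- a * (h * real n + g) + b * d + c * d * real n))"
  defines "F2 \<equiv> (\<lambda>p::real\<times>real. let x = fst p; y = snd p in
             x powr (b - 1) * y powr (e - 1) * (x powr a * y powr d - 1) /
             ((1 - r * x powr c * y powr h) * ln (x powr a * y powr d)))"
  defines "T2 \<equiv> (\<lambda>n::nat. r ^ n *
             ln (((b + c * real n) * (d + e + h * real n)) /
                 ((a + b + c * real n) * (e + h * real n))) /
             (b * d - a * e + c * d * real n - a * h * real n))"
  assumes geom: "\<forall>x\<in>{0<..<(1::real)}. \<forall>y\<in>{0<..<(1::real)}.
                   summable (\<lambda>n. (r * x powr c * y powr h) ^ n)"
  shows "(set_integrable lborel S F1 \<and> summable T1 \<and> d / a > 0 \<and>
          (\<forall>n::nat. (h * real n + g) / (c * real n + b) > 0 \<and>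
                     - a * (h * real n + g) + b * d + c * d * real n \<noteq> 0)
          \<longrightarrow> - (LINT p:S|lborel. F1 p) = (\<Sum>n. T1 n))
       \<and> (set_integrable lborel S F2 \<and> summable T2 \<and>
          (\<forall>n::nat. ((b + c * real n) * (d + e + h * real n)) /
                       ((a + b + c * real n) * (e + h * real n)) > 0 \<and>
                     b * d - a * e + c * d * real n - a * h * real n \<noteq> 0)
          \<longrightarrow> (LINT p:S|lborel. F2 p) = (\<Sum>n. T2 n))"
proof -
  have SS: "S = S0" by (simp add: S_def S0_def)
  define p where "p = (\<lambda>z::real\<times>real. r * fst z powr c * snd z powr h)"
  have lt: "\<bar>p z\<bar> < 1" if "z \<in> S0" for z
  proof -
    have "summable (\<lambda>n. (r * fst z powr c * snd z powr h) ^ n)"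
      using geom that by (auto simp: S0_iff)
    then show ?thesis by (simp add: p_def)
  qed
  have measp: "p \<in> borel_measurable lborel" unfolding p_def by (intro meas_lborel_real) measurable
  show ?thesis
  proof (intro conjI impI)
    assume H1: "set_integrable lborel S F1 \<and> summable T1 \<and> d / a > 0 \<and>
          (\<forall>n::nat. (h * real n + g) / (c * real n + b) > 0 \<and>
                     - a * (h * real n + g) + b * d + c * d * real n \<noteq> 0)"
    define K where "K = (\<lambda>z::real\<times>real. indicator S0 z * (fst z powr (b - 1) * snd z powr (g - 1) / ln (fst z powr a * snd z powr d)))"
    have KF: "indicator S z *\<^sub>R F1 z = K z / (1 - p z)" for z
      by (simp add: F1_def K_def p_def SS Let_def divide_divide_eq_left mult.commute)
    have intK: "integrable lborel (\<lambda>z. K z / (1 - p z))"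
      using H1 unfolding set_integrable_def KF by simp
    have measK: "K \<in> borel_measurable lborel" unfolding K_def by (intro meas_lborel_real) measurable
    have ltK: "\<bar>p z\<bar> < 1" if "K z \<noteq> 0" for z
      using that lt by (cases "z \<in> S0") (auto simp: K_def)
    have sm: "(\<lambda>n. integral\<^sup>L lborel (\<lambda>z. p z ^ n * K z)) sums integral\<^sup>L lborel (\<lambda>z. K z / (1 - p z))"
      by (rule series_int[OF intK measK measp ltK])
    have trm: "- integral\<^sup>L lborel (\<lambda>z. p z ^ n * K z) = T1 n" for n
    proof (cases "r ^ n = 0")
      case True
      then have r0: "r = 0" "n \<noteq> 0" by auto
      then have "(\<lambda>z. p z ^ n * K z) = (\<lambda>z. 0)" by (simp add: p_def power_0_left)
      then show ?thesis using r0 by (simp add: T1_def)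
    next
      case False
      define phi where "phi = (\<lambda>z::real\<times>real. indicator S0 z * (fst z powr (c * real n + b - 1) * snd z powr (h * real n + g - 1) / ln (fst z powr a * snd z powr d)))"
      have pK: "p z ^ n * K z = r ^ n * phi z" for z
      proof (cases "z \<in> S0")
        case True
        then have "0 < fst z" "0 < snd z" by (auto simp: S0_iff)
        from base_pow[OF this, of r c h n b g] True show ?thesis
          by (simp add: p_def K_def phi_def)
      qed (simp add: K_def phi_def)
      have intt: "integrable lborel (\<lambda>z. p z ^ n * K z)"
        by (rule series_int_term[OF intK measK measp ltK])
      have intphi: "integrable lborel phi"
      proof -
        have "integrable lborel (\<lambda>z. (1 / r ^ n) * (p z ^ n * K z))"
          using intt by (rule integrable_mult_right)
        moreover have c1: "(1 / r ^ n) * r ^ n = 1" using False by simp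
        then have "(\<lambda>z. (1 / r ^ n) * (p z ^ n * K z)) = phi"
          by (intro ext) (simp only: pK mult.assoc[symmetric] mult_1)
        ultimately show ?thesis by simp
      qed
      have ne: "- a * (h * real n + g) + d * (c * real n + b) \<noteq> 0"
        using H1 by (simp add: algebra_simps)
      have c1: "- integral\<^sup>L lborel phi = (ln (d/a) - ln ((h * real n + g)/(c * real n + b))) / (- a * (h * real n + g) + d * (c * real n + b))"
        unfolding phi_def by (rule core1) (use H1 ne intphi in \<open>simp_all add: phi_def\<close>)
      have "- integral\<^sup>L lborel (\<lambda>z. p z ^ n * K z) = r ^ n * (- integral\<^sup>L lborel phi)"
        by (simp add: pK)
      also have "\<dots> = T1 n"
        unfolding c1 T1_def by (simp add: algebra_simps)
      finally show ?thesis .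
    qed
    have "T1 sums (- integral\<^sup>L lborel (\<lambda>z. K z / (1 - p z)))"
      using sums_minus[OF sm] by (simp add: trm)
    moreover have "(LINT z:S|lborel. F1 z) = integral\<^sup>L lborel (\<lambda>z. K z / (1 - p z))"
      unfolding set_lebesgue_integral_def KF ..
    ultimately show "- (LINT p:S|lborel. F1 p) = (\<Sum>n. T1 n)"
      by (simp add: sums_unique)
  next
    assume H2: "set_integrable lborel S F2 \<and> summable T2 \<and>
          (\<forall>n::nat. ((b + c * real n) * (d + e + h * real n)) /
                       ((a + b + c * real n) * (e + h * real n)) > 0 \<and>
                     b * d - a * e + c * d * real n - a * h * real n \<noteq> 0)"
    define K where "K = (\<lambda>z::real\<times>real. indicator S0 z * (fst z powr (b - 1) * snd z powr (e - 1) * (fst z powr a * snd z powr d - 1) / ln (fst z powr a * snd z powr d)))"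
    have KF: "indicator S z *\<^sub>R F2 z = K z / (1 - p z)" for z
      by (simp add: F2_def K_def p_def SS Let_def divide_divide_eq_left mult.commute)
    have intK: "integrable lborel (\<lambda>z. K z / (1 - p z))"
      using H2 unfolding set_integrable_def KF by simp
    have measK: "K \<in> borel_measurable lborel" unfolding K_def by (intro meas_lborel_real) measurable
    have ltK: "\<bar>p z\<bar> < 1" if "K z \<noteq> 0" for z
      using that lt by (cases "z \<in> S0") (auto simp: K_def)
    have sm: "(\<lambda>n. integral\<^sup>L lborel (\<lambda>z. p z ^ n * K z)) sums integral\<^sup>L lborel (\<lambda>z. K z / (1 - p z))"
      by (rule series_int[OF intK measK measp ltK])
    have trm: "integral\<^sup>L lborel (\<lambda>z. p z ^ n * K z) = T2 n" for n
    proof (cases "r ^ n = 0")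
      case True
      then have r0: "r = 0" "n \<noteq> 0" by auto
      then have "(\<lambda>z. p z ^ n * K z) = (\<lambda>z. 0)" by (simp add: p_def power_0_left)
      then show ?thesis using r0 by (simp add: T2_def)
    next
      case False
      define phi where "phi = (\<lambda>z::real\<times>real. indicator S0 z * (fst z powr ((b + c * real n) - 1) * snd z powr ((e + h * real n) - 1) * (fst z powr a * snd z powr d - 1) / ln (fst z powr a * snd z powr d)))"
      have pK: "p z ^ n * K z = r ^ n * phi z" for z
      proof (cases "z \<in> S0")
        case True
        then have "0 < fst z" "0 < snd z" by (auto simp: S0_iff)
        then have bp0: "p z ^ n * (fst z powr (b - 1) * snd z powr (e - 1)) = r ^ n * (fst z powr (c * real n + b - 1) * snd z powr (h * real n + e - 1))"
          unfolding p_def by (rule base_pow)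
        have ex: "c * real n + b - 1 = (b + c * real n) - 1" "h * real n + e - 1 = (e + h * real n) - 1" by simp_all
        have bp: "p z ^ n * fst z powr (b - 1) * snd z powr (e - 1) = r ^ n * fst z powr ((b + c * real n) - 1) * snd z powr ((e + h * real n) - 1)"
          using bp0 unfolding ex by (simp only: mult.assoc)
        have K': "K z = fst z powr (b - 1) * snd z powr (e - 1) * (fst z powr a * snd z powr d - 1) / ln (fst z powr a * snd z powr d)"
          using True by (simp add: K_def)
        have phi': "phi z = fst z powr ((b + c * real n) - 1) * snd z powr ((e + h * real n) - 1) * (fst z powr a * snd z powr d - 1) / ln (fst z powr a * snd z powr d)"
          using True by (simp add: phi_def)
        show ?thesis unfolding K' phi'
          by (simp only: times_divide_eq_right mult.assoc[symmetric] bp)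
      qed (simp add: K_def phi_def)
      have intt: "integrable lborel (\<lambda>z. p z ^ n * K z)"
        by (rule series_int_term[OF intK measK measp ltK])
      have intphi: "integrable lborel phi"
      proof -
        have "integrable lborel (\<lambda>z. (1 / r ^ n) * (p z ^ n * K z))"
          using intt by (rule integrable_mult_right)
        moreover have c1: "(1 / r ^ n) * r ^ n = 1" using False by simp
        then have "(\<lambda>z. (1 / r ^ n) * (p z ^ n * K z)) = phi"
          by (intro ext) (simp only: pK mult.assoc[symmetric] mult_1)
        ultimately show ?thesis by simp
      qed
      have ne: "d * (b + c * real n) - a * (e + h * real n) \<noteq> 0"
        using H2 by (simp add: algebra_simps)
      have ps: "((b + c * real n) * (d + (e + h * real n))) / ((a + (b + c * real n)) * (e + h * real n)) > 0"
        using H2 by (simp add: add.assoc)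
      have c2: "integral\<^sup>L lborel phi = ln (((b + c * real n) * (d + (e + h * real n))) / ((a + (b + c * real n)) * (e + h * real n))) / (d * (b + c * real n) - a * (e + h * real n))"
        unfolding phi_def by (rule core2[OF ps ne]) (use intphi in \<open>simp add: phi_def\<close>)
      have "integral\<^sup>L lborel (\<lambda>z. p z ^ n * K z) = r ^ n * integral\<^sup>L lborel phi"
        by (simp add: pK)
      also have "\<dots> = T2 n"
        unfolding c2 T2_def by (simp add: algebra_simps)
      finally show ?thesis .
    qed
    have "T2 sums (integral\<^sup>L lborel (\<lambda>z. K z / (1 - p z)))"
      using sm by (simp add: trm)
    moreover have "(LINT z:S|lborel. F2 z) = integral\<^sup>L lborel (\<lambda>z. K z / (1 - p z))"
      unfolding set_lebesgue_integral_def KF ..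
    ultimately show "(LINT p:S|lborel. F2 p) = (\<Sum>n. T2 n)"
      by (simp add: sums_unique)
  qed
qed

end
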